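(* Fix a real number $\alpha>1$. Then there exists a constant $C>0$ such that, for any $f\in B^{\alpha\log}_{\infty,\infty}(\mathbb{R}^d)$, \[ \|f\|_{B^0_{\infty,1}}\le C\,\|f\|_{B^0_{\infty,\infty}}^{1-1/\alpha}\,\|f\|_{B^{\alpha\log}_{\infty,\infty}}^{1/\alpha}. \]
   Context: Littlewood–Paley decomposition on $\mathbb{R}^d$: let $\chi$ be a smooth radial function supported in $B(0,2)$, equal to $1$ near $B(0,1)$, with $r\mapsto\chi(re)$ nonincreasing for unit vectors $e$; set $\varphi(\xi)=\chi(\xi)-\chi(2\xi)$, $\Delta_{-1}=\chi(D)$, $\Delta_j=\varphi(2^{-j}D)$ for $j\ge0$. For $s,\alpha\in\mathbb{R}$, $p,r\in[1,\infty]$, the logarithmic Besov space $B^{s+\alpha\log}_{p,r}$ is the set of tempered distributions $f$ with $\|f\|_{B^{s+\alpha\log}_{p,r}}:=\|(2^{js}(2+j)^{\alpha}\|\Delta_jf\|_{L^p})_{j\ge-1}\|_{\ell^r}<\infty$; $B^{\alpha\log}_{p,r}:=B^{0+\alpha\log}_{p,r}$ and $B^s_{p,r}:=B^{s+0\log}_{p,r}$. *)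

theory Defs
  imports "HOL-Analysis.Analysis"
begin

fun iter_pderiv :: "'n::finite list \<Rightarrow> (real^'n \<Rightarrow> real) \<Rightarrow> real^'n \<Rightarrow> real" where
  "iter_pderiv [] f = f"
| "iter_pderiv (i # is) f = (\<lambda>x. deriv (\<lambda>t. iter_pderiv is f (x + t *\<^sub>R axis i 1)) 0)"

definition smooth_fun :: "(real^'n::finite \<Rightarrow> real) \<Rightarrow> bool" where
  "smooth_fun f \<longleftrightarrow>
     (\<forall>is. continuous_on UNIV (iter_pderiv is f)) \<and>
     (\<forall>is i x. (\<lambda>t. iter_pderiv is f (x + t *\<^sub>R axis i 1)) differentiable (at 0))"

definition LP_cutoff :: "(real^'n::finite \<Rightarrow> real) \<Rightarrow> bool" where
  "LP_cutoff chi \<longleftrightarrow>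
     smooth_fun chi \<and>
     (\<forall>\<xi> \<eta>. norm \<xi> = norm \<eta> \<longrightarrow> chi \<xi> = chi \<eta>) \<and>
     closure {\<xi>. chi \<xi> \<noteq> 0} \<subseteq> ball 0 2 \<and>
     (\<exists>\<epsilon>>0. \<forall>\<xi>. norm \<xi> < 1 + \<epsilon> \<longrightarrow> chi \<xi> = 1) \<and>
     (\<forall>e r1 r2. norm e = 1 \<longrightarrow> 0 \<le> r1 \<longrightarrow> r1 \<le> r2 \<longrightarrow> chi (r2 *\<^sub>R e) \<le> chi (r1 *\<^sub>R e))"

definition LP_symbol :: "(real^'n::finite \<Rightarrow> real) \<Rightarrow> int \<Rightarrow> real^'n \<Rightarrow> real" where
  "LP_symbol chi j \<xi> =
     (if j = -1 then chi \<xi>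
      else if j \<ge> 0 then chi ((2 powr (- real_of_int j)) *\<^sub>R \<xi>) - chi ((2 * 2 powr (- real_of_int j)) *\<^sub>R \<xi>)
      else 0)"

text \<open>Convolution kernel: inverse Fourier transform of the symbol,
  with the convention hat f(xi) = integral of exp(-i x.xi) f(x) dx.\<close>
definition LP_kernel :: "(real^'n::finite \<Rightarrow> real) \<Rightarrow> int \<Rightarrow> real^'n \<Rightarrow> complex" where
  "LP_kernel chi j x =
     complex_of_real (1 / (2 * pi) ^ CARD('n)) *
       (\<integral>\<xi>. cis (x \<bullet> \<xi>) * complex_of_real (LP_symbol chi j \<xi>) \<partial>lborel)"

definition LP_block :: "(real^'n::finite \<Rightarrow> real) \<Rightarrow> int \<Rightarrow> (real^'n \<Rightarrow> complex) \<Rightarrow> real^'n \<Rightarrow> complex" where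
  "LP_block chi j f x = (\<integral>y. LP_kernel chi j y * f (x - y) \<partial>lborel)"

text \<open>L-infinity norm of Delta_j f (Delta_j f is continuous, so the sup equals the ess sup).\<close>
definition LP_sup :: "(real^'n::finite \<Rightarrow> real) \<Rightarrow> int \<Rightarrow> (real^'n \<Rightarrow> complex) \<Rightarrow> ennreal" where
  "LP_sup chi j f = (SUP x. ennreal (cmod (LP_block chi j f x)))"

text \<open>Logarithmic Besov norms B^{s+alpha log}_{infty,r} for r = infinity and r = 1;
  index k :: nat corresponds to j = k - 1 >= -1.\<close>
definition besov_log_inf_inf :: "(real^'n::finite \<Rightarrow> real) \<Rightarrow> real \<Rightarrow> real \<Rightarrow> (real^'n \<Rightarrow> complex) \<Rightarrow> ennreal" where
  "besov_log_inf_inf chi s \<alpha> f =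
     (SUP k::nat. ennreal (2 powr ((real k - 1) * s) * (real k + 1) powr \<alpha>) * LP_sup chi (int k - 1) f)"

definition besov_log_inf_1 :: "(real^'n::finite \<Rightarrow> real) \<Rightarrow> real \<Rightarrow> real \<Rightarrow> (real^'n \<Rightarrow> complex) \<Rightarrow> ennreal" where
  "besov_log_inf_1 chi s \<alpha> f =
     (\<Sum>k::nat. ennreal (2 powr ((real k - 1) * s) * (real k + 1) powr \<alpha>) * LP_sup chi (int k - 1) f)"

end

theory Submission
  imports Defs
begin

lemma key_ineq:
  fixes m \<beta> :: real assumes "\<beta> > 0" "m \<ge> 1"
  shows "\<beta> * (m+1) powr (-\<beta>-1) \<le> m powr (-\<beta>) - (m+1) powr (-\<beta>)"
proof -
  define x where "x = (m+1)/m"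
  have x1: "x > 1" using assms by (simp add: x_def)
  have lnx: "ln x \<ge> 1/(m+1)"
  proof -
    have "ln (1/x) \<le> 1/x - 1" using x1 by (intro ln_le_minus_one) simp
    moreover have "1/x - 1 = - 1/(m+1)" using assms by (simp add: x_def field_simps)
    moreover have "ln (1/x) = - ln x" using x1 by (simp add: ln_div)
    ultimately show ?thesis by simp
  qed
  have "x powr \<beta> = exp (\<beta> * ln x)" using x1 by (simp add: powr_def)
  also have "\<dots> \<ge> 1 + \<beta> * ln x" by (rule exp_ge_add_one_self)
  finally have h1: "x powr \<beta> \<ge> 1 + \<beta> * ln x" .
  have "\<beta> * (1/(m+1)) \<le> \<beta> * ln x" using lnx assms by (intro mult_left_mono) auto
  hence "x powr \<beta> \<ge> 1 + \<beta> / (m+1)" using h1 by simp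
  hence "(m+1) powr (-\<beta>) * x powr \<beta> \<ge> (m+1) powr (-\<beta>) * (1 + \<beta> / (m+1))"
    by (intro mult_left_mono) auto
  moreover have "(m+1) powr (-\<beta>) * x powr \<beta> = m powr (-\<beta>)"
    using assms by (simp add: x_def powr_divide powr_minus field_simps)
  moreover have "(m+1) powr (-\<beta>) * (1 + \<beta> / (m+1)) = (m+1) powr (-\<beta>) + \<beta> * (m+1) powr (-\<beta>-1)"
    using assms by (simp add: powr_diff field_simps)
  ultimately show ?thesis by simp
qed

lemma tail_bound:
  fixes \<alpha> :: real assumes "\<alpha> > 1" "N \<ge> 1" "N \<le> n"
  shows "(\<Sum>k\<in>{N..<n}. (real k + 1) powr (-\<alpha>)) \<le> (real N powr (1-\<alpha>) - real n powr (1-\<alpha>)) / (\<alpha>-1)"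
  using assms(3)
proof (induction n rule: dec_induct)
  case base then show ?case by simp
next
  case (step n)
  have "(\<alpha>-1) * (real n + 1) powr (-(\<alpha>-1)-1) \<le> real n powr (-(\<alpha>-1)) - (real n+1) powr (-(\<alpha>-1))"
    using assms step by (intro key_ineq) auto
  hence "(real n + 1) powr (-\<alpha>) \<le> (real n powr (1-\<alpha>) - (real n+1) powr (1-\<alpha>)) / (\<alpha>-1)"
    using assms by (simp add: field_simps)
  hence "(real n + 1) powr (-\<alpha>) \<le> real n powr (1-\<alpha>) / (\<alpha>-1) - real (Suc n) powr (1-\<alpha>) / (\<alpha>-1)"
    by (simp add: diff_divide_distrib add.commute[of 1])
  moreover have "(\<Sum>k\<in>{N..<Suc n}. (real k + 1) powr (-\<alpha>)) = (\<Sum>k\<in>{N..<n}. (real k + 1) powr (-\<alpha>)) + (real n + 1) powr (-\<alpha>)"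
    using step(1) by simp
  ultimately show ?case using step(3) by (simp add: diff_divide_distrib)
qed

lemma main_real:
  fixes \<alpha> A B :: real and r :: "nat \<Rightarrow> real"
  assumes a: "\<alpha> > 1" and r0: "\<And>k. 0 \<le> r k" and rA: "\<And>k. r k \<le> A"
    and rB: "\<And>k. (real k + 1) powr \<alpha> * r k \<le> B" and AB: "A \<le> B"
  shows "(\<Sum>k<n. r k) \<le> (1 + 2 powr (\<alpha>-1)/(\<alpha>-1)) * A powr (1-1/\<alpha>) * B powr (1/\<alpha>)"
proof (cases "A = 0")
  case True
  then have "\<And>k. r k = 0" using r0 rA by (meson order_antisym)
  then show ?thesis using a by simp
next
  case False
  then have A0: "A > 0" using r0[of 0] rA[of 0] by linarith
  then have B0: "B > 0" using AB by linarith
  define t where "t = (B/A) powr (1/\<alpha>)"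
  have t1: "t \<ge> 1" unfolding t_def using A0 AB a by (intro ge_one_powr_ge_zero) auto
  define N where "N = nat \<lfloor>t\<rfloor>"
  have N1: "N \<ge> 1" using t1 by (simp add: N_def le_nat_iff)
  have Nt: "real N \<le> t" using t1 by (simp add: N_def)
  have tN: "t < real N + 1" using t1 by (simp add: N_def)
  have Nt2: "real N \<ge> t/2" using tN N1 by simp
  define m where "m = max n N"
  have "(\<Sum>k<n. r k) \<le> (\<Sum>k<m. r k)"
    by (rule sum_mono2) (use r0 in \<open>auto simp: m_def\<close>)
  also have "\<dots> = (\<Sum>k\<in>{0..<N}. r k) + (\<Sum>k\<in>{N..<m}. r k)"
    by (subst sum.atLeastLessThan_concat) (auto simp: m_def atLeast0LessThan)
  also have "(\<Sum>k\<in>{0..<N}. r k) \<le> real N * A"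
    using sum_mono[of "{0..<N}" r "\<lambda>_. A"] rA by simp
  also have "(\<Sum>k\<in>{N..<m}. r k) \<le> (\<Sum>k\<in>{N..<m}. B * (real k + 1) powr (-\<alpha>))"
  proof (rule sum_mono)
    fix k
    have p: "(real k + 1) powr \<alpha> > 0" by simp
    have "r k \<le> B / (real k + 1) powr \<alpha>" using rB[of k] p by (simp add: field_simps)
    then show "r k \<le> B * (real k + 1) powr (-\<alpha>)" by (simp add: powr_minus divide_inverse)
  qed
  also have "\<dots> = B * (\<Sum>k\<in>{N..<m}. (real k + 1) powr (-\<alpha>))" by (simp add: sum_distrib_left)
  also have "\<dots> \<le> B * ((real N powr (1-\<alpha>) - real m powr (1-\<alpha>)) / (\<alpha>-1))"
    using tail_bound[OF a N1, of m] B0 by (intro mult_left_mono) (auto simp: m_def)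
  also have "\<dots> \<le> B * (real N powr (1-\<alpha>) / (\<alpha>-1))"
    using B0 a by (intro mult_left_mono divide_right_mono) auto
  also have "real N powr (1-\<alpha>) \<le> (t/2) powr (1-\<alpha>)"
    using Nt2 t1 a by (intro powr_mono2') auto
  also have "(t/2) powr (1-\<alpha>) = t powr (1-\<alpha>) * 2 powr (\<alpha>-1)"
  proof -
    have "2 powr (\<alpha>-1) = 1 / 2 powr (1-\<alpha>)" using powr_minus_divide[of 2 "1-\<alpha>"] by simp
    then show ?thesis using t1 by (simp add: powr_divide)
  qed
  finally have S: "(\<Sum>k<n. r k) \<le> t * A + B * (t powr (1-\<alpha>) * 2 powr (\<alpha>-1) / (\<alpha>-1))"
    using Nt A0 a B0 by (smt (verit) divide_right_mono mult_left_mono mult_right_mono)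
  have e1: "t * A = A powr (1-1/\<alpha>) * B powr (1/\<alpha>)"
  proof -
    have q: "A powr (1/\<alpha>) * A powr (1 - 1/\<alpha>) = A" using A0 by (simp add: powr_add[symmetric])
    have "t * A = B powr (1/\<alpha>) / A powr (1/\<alpha>) * A" using A0 B0 by (simp add: t_def powr_divide)
    also have "\<dots> = B powr (1/\<alpha>) / A powr (1/\<alpha>) * (A powr (1/\<alpha>) * A powr (1 - 1/\<alpha>))" using q by simp
    finally show ?thesis using A0 by simp
  qed
  have e2: "B * t powr (1-\<alpha>) = A powr (1-1/\<alpha>) * B powr (1/\<alpha>)"
  proof -
    have "t powr (1-\<alpha>) = (B/A) powr (1/\<alpha> - 1)"
      using A0 B0 a by (simp add: t_def powr_powr field_simps)
    also have "\<dots> = B powr (1/\<alpha>) / B * (A / A powr (1/\<alpha>))"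
      using A0 B0 by (simp add: powr_divide powr_diff)
    finally show ?thesis using A0 B0 by (simp add: powr_diff field_simps)
  qed
  define c where "c = 2 powr (\<alpha>-1) / (\<alpha>-1)"
  define P where "P = A powr (1-1/\<alpha>) * B powr (1/\<alpha>)"
  have "B * (t powr (1-\<alpha>) * 2 powr (\<alpha>-1) / (\<alpha>-1)) = (B * t powr (1-\<alpha>)) * c"
    by (simp add: c_def)
  with S e1 e2 have "(\<Sum>k<n. r k) \<le> P + P * c" unfolding P_def by simp
  also have "P + P * c = (1 + c) * P" by (simp add: algebra_simps)
  finally show ?thesis unfolding P_def c_def by (simp add: mult.assoc)
qed

theorem lemma2p5:
  fixes chi :: "real^'n::finite \<Rightarrow> real" and \<alpha> :: real
  assumes "LP_cutoff chi" and "\<alpha> > 1"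
  shows "\<exists>C>0. \<forall>f :: real^'n \<Rightarrow> complex.
           f \<in> borel_measurable lborel \<longrightarrow> bounded (range f) \<longrightarrow>
           besov_log_inf_inf chi 0 \<alpha> f < \<infinity> \<longrightarrow>
           besov_log_inf_1 chi 0 0 f \<le>
             ennreal (C * enn2real (besov_log_inf_inf chi 0 0 f) powr (1 - 1 / \<alpha>)
                        * enn2real (besov_log_inf_inf chi 0 \<alpha> f) powr (1 / \<alpha>))"
proof (intro exI[of _ "1 + 2 powr (\<alpha>-1)/(\<alpha>-1)"] conjI allI impI)
  show "0 < 1 + 2 powr (\<alpha>-1)/(\<alpha>-1)" using assms(2) by (simp add: add_pos_nonneg)
  fix f :: "real^'n \<Rightarrow> complex"
  assume fin: "besov_log_inf_inf chi 0 \<alpha> f < \<infinity>"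
  define a where "a k = LP_sup chi (int k - 1) f" for k :: nat
  define w where "w k = (real k + 1) powr \<alpha>" for k :: nat
  have w1: "w k \<ge> 1" for k using assms(2) by (simp add: w_def ge_one_powr_ge_zero)
  have B0: "besov_log_inf_inf chi 0 0 f = (SUP k. a k)"
    by (simp add: besov_log_inf_inf_def a_def)
  have Ba: "besov_log_inf_inf chi 0 \<alpha> f = (SUP k. ennreal (w k) * a k)"
    by (simp add: besov_log_inf_inf_def a_def w_def)
  have S1: "besov_log_inf_1 chi 0 0 f = (\<Sum>k. a k)"
    by (simp add: besov_log_inf_1_def a_def)
  define Ba' where "Ba' = (SUP k. ennreal (w k) * a k)"
  have Bfin: "Ba' < \<infinity>" using fin Ba Ba'_def by simp
  have le_wa: "a k \<le> ennreal (w k) * a k" for k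
  proof -
    have "a k = ennreal 1 * a k" by simp
    also have "\<dots> \<le> ennreal (w k) * a k" using w1[of k] by (intro mult_right_mono) auto
    finally show ?thesis .
  qed
  have waB: "ennreal (w k) * a k \<le> Ba'" for k unfolding Ba'_def by (rule SUP_upper) simp
  have aB: "a k \<le> Ba'" for k using le_wa[of k] waB[of k] by (rule order_trans)
  have afin: "a k < \<infinity>" for k using aB[of k] Bfin by (rule le_less_trans)
  have B0le: "(SUP k. a k) \<le> Ba'" by (rule SUP_least) (rule aB)
  have B0fin: "(SUP k. a k) < \<infinity>" using B0le Bfin by (rule le_less_trans)
  define r where "r k = enn2real (a k)" for k
  define A where "A = enn2real (SUP k. a k)"
  define B where "B = enn2real Ba'"
  have ar: "a k = ennreal (r k)" for k using afin[of k] by (simp add: r_def)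
  have r0: "0 \<le> r k" for k by (simp add: r_def)
  have rA: "r k \<le> A" for k unfolding r_def A_def
    using B0fin by (intro enn2real_mono) (auto intro: SUP_upper)
  have rB: "(real k + 1) powr \<alpha> * r k \<le> B" for k
  proof -
    have "enn2real (ennreal (w k) * a k) \<le> B" unfolding B_def using waB[of k] Bfin by (intro enn2real_mono) auto
    then show ?thesis using w1[of k] by (simp add: enn2real_mult r_def w_def)
  qed
  have AB: "A \<le> B" unfolding A_def B_def using B0le Bfin by (intro enn2real_mono) auto
  have "(\<Sum>k. a k) \<le> ennreal ((1 + 2 powr (\<alpha>-1)/(\<alpha>-1)) * A powr (1-1/\<alpha>) * B powr (1/\<alpha>))"
    unfolding suminf_eq_SUP
  proof (rule SUP_least)
    fix n
    have "(\<Sum>k<n. a k) = ennreal (\<Sum>k<n. r k)" using r0 by (simp add: ar sum_ennreal)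
    also have "\<dots> \<le> ennreal ((1 + 2 powr (\<alpha>-1)/(\<alpha>-1)) * A powr (1-1/\<alpha>) * B powr (1/\<alpha>))"
      by (intro ennreal_leI main_real[OF assms(2) r0 rA rB AB])
    finally show "(\<Sum>k<n. a k) \<le> ennreal ((1 + 2 powr (\<alpha>-1)/(\<alpha>-1)) * A powr (1-1/\<alpha>) * B powr (1/\<alpha>))" .
  qed
  then show "besov_log_inf_1 chi 0 0 f \<le>
             ennreal ((1 + 2 powr (\<alpha>-1)/(\<alpha>-1)) * enn2real (besov_log_inf_inf chi 0 0 f) powr (1 - 1 / \<alpha>)
                        * enn2real (besov_log_inf_inf chi 0 \<alpha> f) powr (1 / \<alpha>))"
    using S1 B0 Ba by (simp add: A_def B_def Ba'_def)
qed

end
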